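(* Let $u(x,t)$ be sufficiently smooth in $x$ (with bounded derivatives), $h>0$, and define the operators $$\mathscr L_1=\frac{1}{h^2}\Big(1-\frac1{90}\delta_x^4\Big)^{-1}\delta_x^2\Big(1-\frac1{12}\delta_x^2\Big),\qquad \mathscr L_2=\frac{1}{h^2}\Big(1+\frac1{560}\delta_x^6\Big)^{-1}\delta_x^2\Big(1-\frac1{12}\delta_x^2+\frac1{90}\delta_x^4\Big).$$ Then $$\frac{\partial^2u(x_j,t_k)}{\partial x^2}=\mathscr L_1u(x_j,t_k)+O(h^6)\quad\text{and}\quad \frac{\partial^2u(x_j,t_k)}{\partial x^2}=\mathscr L_2u(x_j,t_k)+O(h^8).$$
   Context: $\delta_x$ is the centered difference in $x$ with step $h$: $\delta_x u(x,t)=u(x+\frac h2,t)-u(x-\frac h2,t)$, so $\delta_x^2u(x,t)=u(x+h,t)-2u(x,t)+u(x-h,t)$, and $\delta_x^{2m}=(\delta_x^2)^m$. The operators act on functions of $x$ (with $t$ fixed), and $x_j=jh$, $t_k$ are grid points; the inverses $(1-\frac1{90}\delta_x^4)^{-1}$, $(1+\frac1{560}\delta_x^6)^{-1}$ are understood as the inverses of these difference operators (e.g. by their convergent Neumann series on bounded functions). *)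

theory Defs
  imports "HOL-Analysis.Analysis"
begin

definition dx2 :: "real \<Rightarrow> (real \<Rightarrow> real) \<Rightarrow> (real \<Rightarrow> real)" where
  "dx2 h f = (\<lambda>x. f (x + h) - 2 * f x + f (x - h))"

text \<open>Inverse of (1 - A) via its Neumann series: (1 - A)^{-1} g = sum_n A^n g (pointwise).\<close>
definition neumann_inv :: "((real \<Rightarrow> real) \<Rightarrow> (real \<Rightarrow> real)) \<Rightarrow> (real \<Rightarrow> real) \<Rightarrow> (real \<Rightarrow> real)" where
  "neumann_inv A g = (\<lambda>x. \<Sum>n. (A ^^ n) g x)"

definition L1 :: "real \<Rightarrow> (real \<Rightarrow> real) \<Rightarrow> (real \<Rightarrow> real)" where
  "L1 h f = (\<lambda>x. (1 / h^2) *
     neumann_inv (\<lambda>\<phi> y. (1/90) * ((dx2 h ^^ 2) \<phi>) y)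
       (dx2 h (\<lambda>y. f y - (1/12) * (dx2 h f) y)) x)"

definition L2 :: "real \<Rightarrow> (real \<Rightarrow> real) \<Rightarrow> (real \<Rightarrow> real)" where
  "L2 h f = (\<lambda>x. (1 / h^2) *
     neumann_inv (\<lambda>\<phi> y. - (1/560) * ((dx2 h ^^ 3) \<phi>) y)
       (dx2 h (\<lambda>y. f y - (1/12) * (dx2 h f) y + (1/90) * ((dx2 h ^^ 2) f) y)) x)"

end

theory Submission imports Defs begin

lemma neumann_err:
  fixes A :: "(real\<Rightarrow>real)\<Rightarrow>(real\<Rightarrow>real)"
  assumes lin: "\<And>\<phi> \<psi>. A (\<lambda>y. \<phi> y - \<psi> y) = (\<lambda>y. A \<phi> y - A \<psi> y)"
    and contr: "\<And>\<phi> M. (\<forall>y. \<bar>\<phi> y\<bar> \<le> M) \<Longrightarrow> (\<forall>y. \<bar>A \<phi> y\<bar> \<le> q * M)"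
    and q: "0 \<le> q" "q < 1"
    and vb: "\<forall>y. \<bar>v y\<bar> \<le> M" and Tb: "\<forall>y. \<bar>v y - A v y - g y\<bar> \<le> K"
  shows "\<bar>v x - neumann_inv A g x\<bar> \<le> K / (1 - q)"
proof -
  have linn: "(A^^n) (\<lambda>y. \<phi> y - \<psi> y) = (\<lambda>y. (A^^n) \<phi> y - (A^^n) \<psi> y)" for n \<phi> \<psi>
    by (induct n) (simp_all add: lin)
  have bnd: "\<forall>y. \<bar>(A^^n) \<phi> y\<bar> \<le> q^n * M" if "\<forall>y. \<bar>\<phi> y\<bar> \<le> M" for n \<phi> M
  proof (induct n)
    case 0 then show ?case using that by simp
  next
    case (Suc n)
    from contr[OF Suc] show ?case by (simp add: mult.assoc)
  qed
  define T where "T = (\<lambda>y. v y - A v y - g y)"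
  have g: "g = (\<lambda>y. (\<lambda>y. v y - A v y) y - T y)" by (simp add: T_def)
  have gn: "(A^^n) g x = ((A^^n) v x - (A^^Suc n) v x) - (A^^n) T x" for n
  proof -
    have "(A^^n) g x = (A^^n) (\<lambda>y. v y - A v y) x - (A^^n) T x"
      by (subst g, subst linn) simp
    also have "(A^^n) (\<lambda>y. v y - A v y) x = (A^^n) v x - (A^^n) (A v) x"
      by (simp add: linn)
    also have "(A^^n) (A v) = (A^^Suc n) v" by (simp add: funpow_swap1)
    finally show ?thesis .
  qed
  have lim0: "(\<lambda>n. (A^^n) v x) \<longlonglongrightarrow> 0"
  proof (rule Lim_null_comparison)
    show "\<forall>\<^sub>F n in sequentially. norm ((A^^n) v x) \<le> q^n * M" using bnd[OF vb] by simp
    show "(\<lambda>n. q^n * M) \<longlonglongrightarrow> 0"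
      by (rule tendsto_mult_left_zero, rule LIMSEQ_power_zero) (use q in simp)
  qed
  have s1: "(\<lambda>n. (A^^n) v x - (A^^Suc n) v x) sums (v x - 0)"
    using telescope_sums'[OF lim0] by simp
  have K0: "0 \<le> K" using Tb by (meson abs_ge_zero order_trans)
  have Tb': "\<forall>y. \<bar>T y\<bar> \<le> K" using Tb by (simp add: T_def)
  have geo: "summable (\<lambda>n. q^n * K)"
    by (rule summable_mult2, rule summable_geometric) (use q in simp)
  have nb: "norm ((A^^n) T x) \<le> q^n * K" for n using bnd[OF Tb'] by simp
  have s2: "summable (\<lambda>n. (A^^n) T x)"
    by (rule summable_comparison_test'[OF geo]) (use nb in auto)
  have s2n: "summable (\<lambda>n. norm ((A^^n) T x))"
    by (rule summable_comparison_test'[OF geo]) (use nb in auto)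
  have "neumann_inv A g x = (\<Sum>n. ((A^^n) v x - (A^^Suc n) v x) - (A^^n) T x)"
    unfolding neumann_inv_def using gn by simp
  also have "\<dots> = v x - (\<Sum>n. (A^^n) T x)"
    using suminf_diff[OF sums_summable[OF s1] s2, symmetric] sums_unique[OF s1] by simp
  finally have eq: "v x - neumann_inv A g x = (\<Sum>n. (A^^n) T x)" by simp
  have "\<bar>\<Sum>n. (A^^n) T x\<bar> \<le> (\<Sum>n. norm ((A^^n) T x))"
    using summable_norm[OF s2n] by simp
  also have "\<dots> \<le> (\<Sum>n. q^n * K)" by (rule suminf_le[OF nb s2n geo])
  also have "\<dots> = K / (1 - q)"
    using suminf_mult2[of "\<lambda>n. q^n" K] summable_geometric[of q] suminf_geometric[of q] q
    by simp
  finally show ?thesis using eq by simp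
qed

definition sh :: "real \<Rightarrow> real \<Rightarrow> int \<Rightarrow> real" where "sh x h m = x + of_int m * h"

lemma dx2_sh: "dx2 h \<phi> (sh x h m) = \<phi> (sh x h (m+1)) - 2 * \<phi> (sh x h m) + \<phi> (sh x h (m - 1))"
  unfolding dx2_def sh_def by (simp add: algebra_simps)

lemma dx2_lin: "dx2 h (\<lambda>y. \<phi> y - \<psi> y) = (\<lambda>y. dx2 h \<phi> y - dx2 h \<psi> y)"
  unfolding dx2_def by (simp add: fun_eq_iff algebra_simps)

lemma dx2_bnd: "\<forall>y. \<bar>\<phi> y\<bar> \<le> M \<Longrightarrow> \<forall>y. \<bar>dx2 h \<phi> y\<bar> \<le> 4 * M"
  unfolding dx2_def
proof
  fix y assume a: "\<forall>y. \<bar>\<phi> y\<bar> \<le> M"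
  from a[rule_format, of "y+h"] a[rule_format, of y] a[rule_format, of "y-h"]
  show "\<bar>\<phi> (y + h) - 2 * \<phi> y + \<phi> (y - h)\<bar> \<le> 4 * M" by linarith
qed

lemma taylor_bound:
  fixes Df :: "nat \<Rightarrow> real \<Rightarrow> real"
  assumes d: "\<forall>m y. m < n \<longrightarrow> (Df m has_real_derivative Df (Suc m) y) (at y)"
    and b: "\<forall>y. \<bar>Df n y\<bar> \<le> B"
  shows "\<bar>Df 0 (x + z) - (\<Sum>m<n. Df m x / fact m * z^m)\<bar> \<le> B * \<bar>z\<bar>^n"
proof -
  have "\<exists>t. \<bar>t\<bar> \<le> \<bar>z\<bar> \<and> (\<lambda>s. Df 0 (x + s)) z = (\<Sum>m<n. (\<lambda>s. Df m (x + s)) 0 / (fact m) * z ^ m) + (\<lambda>s. Df n (x + s)) t / (fact n) * z ^ n"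
  proof (rule Maclaurin_bi_le[where diff = "\<lambda>m s. Df m (x + s)"])
    show "\<forall>m t. m < n \<and> \<bar>t\<bar> \<le> \<bar>z\<bar> \<longrightarrow> ((\<lambda>s. Df m (x + s)) has_real_derivative Df (Suc m) (x + t)) (at t)"
    proof (intro allI impI)
      fix m t assume "m < n \<and> \<bar>t\<bar> \<le> \<bar>z\<bar>"
      then have "(Df m has_real_derivative Df (Suc m) (x + t)) (at (x + t))" using d by blast
      then show "((\<lambda>s. Df m (x + s)) has_real_derivative Df (Suc m) (x + t)) (at t)"
        using DERIV_shift[of "Df m" _ t x] by (simp add: add.commute)
    qed
  qed simp
  then obtain t where "Df 0 (x + z) = (\<Sum>m<n. Df m x / fact m * z^m) + Df n (x + t) / fact n * z^n"
    by auto
  then have "\<bar>Df 0 (x + z) - (\<Sum>m<n. Df m x / fact m * z^m)\<bar> = \<bar>Df n (x + t)\<bar> / fact n * \<bar>z\<bar>^n"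
    by (simp add: abs_mult power_abs)
  also have "\<dots> \<le> \<bar>Df n (x + t)\<bar> * \<bar>z\<bar>^n"
  proof (intro mult_right_mono)
    have "\<bar>Df n (x + t)\<bar> / fact n \<le> \<bar>Df n (x + t)\<bar> / 1"
      by (rule divide_left_mono) (auto simp: fact_ge_1)
    then show "\<bar>Df n (x + t)\<bar> / fact n \<le> \<bar>Df n (x + t)\<bar>" by simp
  qed simp
  also have "\<dots> \<le> B * \<bar>z\<bar>^n" using b by (intro mult_right_mono) auto
  finally show ?thesis .
qed

lemma funpow2: "(F ^^ 2) = F \<circ> F" by (simp add: numeral_2_eq_2)
lemma funpow3: "(F ^^ 3) = F \<circ> F \<circ> F" by (simp add: numeral_3_eq_3 comp_assoc)

lemma sum6: "(\<Sum>k<6. r^k * (c::nat\<Rightarrow>real) k) = c 0 + r * c 1 + r^2 * c 2 + r^3 * c 3 + r^4 * c 4 + r^5 * c 5"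
  by (simp add: eval_nat_numeral)
lemma sum8: "(\<Sum>k<8. r^k * (c::nat\<Rightarrow>real) k) = c 0 + r * c 1 + r^2 * c 2 + r^3 * c 3 + r^4 * c 4 + r^5 * c 5 + r^6 * c 6 + r^7 * c 7"
  by (simp add: eval_nat_numeral)
lemma sum10: "(\<Sum>k<10. r^k * (c::nat\<Rightarrow>real) k) = c 0 + r * c 1 + r^2 * c 2 + r^3 * c 3 + r^4 * c 4 + r^5 * c 5 + r^6 * c 6 + r^7 * c 7 + r^8 * c 8 + r^9 * c 9"
  by (simp add: eval_nat_numeral)

lemma sumQ6: "(\<Sum>k<6. r^k * (real ((k+2)*(k+1)) * (c::nat\<Rightarrow>real) (k+2))) = 2 * c 2 + r * (6 * c 3) + r^2 * (12 * c 4) + r^3 * (20 * c 5) + r^4 * (30 * c 6) + r^5 * (42 * c 7)"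
  by (simp add: eval_nat_numeral)
lemma sumQ8: "(\<Sum>k<8. r^k * (real ((k+2)*(k+1)) * (c::nat\<Rightarrow>real) (k+2))) = 2 * c 2 + r * (6 * c 3) + r^2 * (12 * c 4) + r^3 * (20 * c 5) + r^4 * (30 * c 6) + r^5 * (42 * c 7) + r^6 * (56 * c 8) + r^7 * (72 * c 9)"
  by (simp add: eval_nat_numeral)

lemma trunc1:
  fixes f v :: "real \<Rightarrow> real" and c :: "nat \<Rightarrow> real"
  assumes tf: "\<And>m. \<bar>f (sh y h m) - (\<Sum>k<8. real_of_int m^k * c k)\<bar> \<le> \<bar>real_of_int m\<bar>^8 * H"
    and tq: "\<And>m. \<bar>v (sh y h m) - (\<Sum>k<6. real_of_int m^k * (real ((k+2)*(k+1)) * c (k+2)))\<bar> \<le> \<bar>real_of_int m\<bar>^6 * H"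
    and H: "0 \<le> H"
  shows "\<bar>v (sh y h 0) - (1/90) * (dx2 h ^^ 2) v (sh y h 0)
          - dx2 h (\<lambda>y. f y - 1/12 * dx2 h f y) (sh y h 0)\<bar> \<le> 50 * H"
proof -
  have a: "\<bar>f (sh y h m) - (\<Sum>k<8. real_of_int m^k * c k)\<bar> \<le> \<bar>real_of_int m\<bar>^8 * H" 
    "\<bar>v (sh y h m) - (\<Sum>k<6. real_of_int m^k * (real ((k+2)*(k+1)) * c (k+2)))\<bar> \<le> \<bar>real_of_int m\<bar>^6 * H"
    if "m \<in> {-2,-1,0,1,2}" for m using tf tq by auto
  note b = a[of 2] a[of 1] a[of 0] a[of "-1"] a[of "-2"]
  show ?thesis
    using b H apply (simp only: sumQ6 sum8)
    apply (simp add: dx2_sh funpow2)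
    by argo
qed

lemma trunc2:
  fixes f v :: "real \<Rightarrow> real" and c :: "nat \<Rightarrow> real"
  assumes tf: "\<And>m. \<bar>f (sh y h m) - (\<Sum>k<10. real_of_int m^k * c k)\<bar> \<le> \<bar>real_of_int m\<bar>^10 * H"
    and tq: "\<And>m. \<bar>v (sh y h m) - (\<Sum>k<8. real_of_int m^k * (real ((k+2)*(k+1)) * c (k+2)))\<bar> \<le> \<bar>real_of_int m\<bar>^8 * H"
    and H: "0 \<le> H"
  shows "\<bar>v (sh y h 0) - (- (1/560) * (dx2 h ^^ 3) v (sh y h 0))
          - dx2 h (\<lambda>y. f y - (1/12) * (dx2 h f) y + (1/90) * ((dx2 h ^^ 2) f) y) (sh y h 0)\<bar> \<le> 1700 * H"
proof -
  have a: "\<bar>f (sh y h m) - (\<Sum>k<10. real_of_int m^k * c k)\<bar> \<le> \<bar>real_of_int m\<bar>^10 * H" 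
    "\<bar>v (sh y h m) - (\<Sum>k<8. real_of_int m^k * (real ((k+2)*(k+1)) * c (k+2)))\<bar> \<le> \<bar>real_of_int m\<bar>^8 * H"
    for m using tf tq by auto
  note b = a[of 3] a[of 2] a[of 1] a[of 0] a[of "-1"] a[of "-2"] a[of "-3"]
  show ?thesis
    using b H apply (simp only: sumQ8 sum10)
    apply (simp add: dx2_sh funpow2 funpow3)
    using [[argo_timeout = 150]] by argo
qed

lemma coefQ: "h^2 * ((a::real) / fact k * (r*h)^k) = r^k * (real((k+2)*(k+1)) * (a * h^(k+2) / fact (k+2)))"
proof -
  have f: "(fact (k+2)::real) = real((k+2)*(k+1)) * fact k" by (simp add: fact_Suc algebra_simps)
  have p: "h^(k+2) = h^2 * h^k" by (metis power_add mult.commute)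
  have nz0: "(0::real) < real((k+2)*(k+1))" by (simp only: of_nat_0_less_iff) simp
  have nz: "real((k+2)*(k+1)) \<noteq> 0" "(fact k :: real) \<noteq> 0" using nz0 by auto
  have "r^k * (real((k+2)*(k+1)) * (a * (h^2 * h^k) / (real((k+2)*(k+1)) * fact k)))
      = r^k * (a * (h^2 * h^k) / fact k)" using nz by simp
  then show ?thesis unfolding f p by (simp add: power_mult_distrib mult_ac)
qed

lemma part1:
  fixes D :: "nat \<Rightarrow> real \<Rightarrow> real"
  assumes der: "\<forall>m y. m < 10 \<longrightarrow> (D m has_real_derivative D (Suc m) y) (at y)"
    and bnd: "\<forall>y. \<bar>D 8 y\<bar> \<le> B8" and b2: "\<forall>y. \<bar>D 2 y\<bar> \<le> B2" and h: "h > 0"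
  shows "\<bar>D 2 x - L1 h (D 0) x\<bar> \<le> 61 * B8 * h^6"
proof -
  define f where "f = D 0"
  define v where "v = (\<lambda>y. h^2 * D 2 y)"
  define A where "A = (\<lambda>\<phi> y. (1/90::real) * ((dx2 h ^^ 2) \<phi>) y)"
  define g where "g = dx2 h (\<lambda>y. f y - (1/12) * (dx2 h f) y)"
  define H where "H = B8 * h^8"
  have B0: "0 \<le> B8" using bnd by (meson abs_ge_zero order_trans)
  have H0: "0 \<le> H" unfolding H_def using B0 h by simp
  have T: "\<bar>v y - A v y - g y\<bar> \<le> 50 * H" for y
  proof -
    define c where "c k = D k y * h^k / fact k" for k
    have tf: "\<bar>f (sh y h m) - (\<Sum>k<8. real_of_int m^k * c k)\<bar> \<le> \<bar>real_of_int m\<bar>^8 * H" for m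
    proof -
      have "\<bar>D 0 (y + of_int m * h) - (\<Sum>k<8. D k y / fact k * (of_int m * h)^k)\<bar> \<le> B8 * \<bar>of_int m * h\<bar>^8"
        by (rule taylor_bound) (use der bnd in auto)
      moreover have "(\<Sum>k<8. D k y / fact k * (of_int m * h)^k) = (\<Sum>k<8. real_of_int m^k * c k)"
        by (rule sum.cong) (auto simp: c_def power_mult_distrib)
      ultimately show ?thesis using h by (simp add: f_def sh_def H_def abs_mult power_mult_distrib mult_ac)
    qed
    have tq: "\<bar>v (sh y h m) - (\<Sum>k<6. real_of_int m^k * (real ((k+2)*(k+1)) * c (k+2)))\<bar> \<le> \<bar>real_of_int m\<bar>^6 * H" for m
    proof -
      have "\<bar>(\<lambda>k. D (k+2)) 0 (y + of_int m * h) - (\<Sum>k<6. (\<lambda>k. D (k+2)) k y / fact k * (of_int m * h)^k)\<bar> \<le> B8 * \<bar>of_int m * h\<bar>^6"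
        by (rule taylor_bound) (use der bnd in auto)
      then have "\<bar>D 2 (y + of_int m * h) - (\<Sum>k<6. D (k+2) y / fact k * (of_int m * h)^k)\<bar> \<le> B8 * \<bar>of_int m * h\<bar>^6"
        by (simp add: numeral_2_eq_2)
      moreover have "h^2 * (\<Sum>k<6. D (k+2) y / fact k * (of_int m * h)^k) = (\<Sum>k<6. real_of_int m^k * (real ((k+2)*(k+1)) * c (k+2)))"
        unfolding sum_distrib_left
        by (intro sum.cong refl) (unfold c_def, rule coefQ)
      ultimately have "h^2 * \<bar>D 2 (y + of_int m * h) - (\<Sum>k<6. D (k+2) y / fact k * (of_int m * h)^k)\<bar> \<le> h^2 * (B8 * \<bar>of_int m * h\<bar>^6)"
        and eq: "h^2 * (\<Sum>k<6. D (k+2) y / fact k * (of_int m * h)^k) = (\<Sum>k<6. real_of_int m^k * (real ((k+2)*(k+1)) * c (k+2)))"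
        by (auto intro: mult_left_mono)
      moreover have "h^2 * \<bar>D 2 (y + of_int m * h) - (\<Sum>k<6. D (k+2) y / fact k * (of_int m * h)^k)\<bar>
         = \<bar>v (sh y h m) - (\<Sum>k<6. real_of_int m^k * (real ((k+2)*(k+1)) * c (k+2)))\<bar>"
        unfolding eq[symmetric] v_def sh_def by (simp add: abs_mult right_diff_distrib[symmetric])
      moreover have "h^2 * (B8 * \<bar>of_int m * h\<bar>^6) = \<bar>real_of_int m\<bar>^6 * H"
        using h by (simp add: H_def abs_mult power_mult_distrib power_add[symmetric] mult_ac)
      ultimately show ?thesis by simp
    qed
    have sh0: "sh y h 0 = y" by (simp add: sh_def)
    from trunc1[OF tf tq H0] show ?thesis unfolding sh0 A_def g_def by simp
  qed
  have lin: "A (\<lambda>y. \<phi> y - \<psi> y) = (\<lambda>y. A \<phi> y - A \<psi> y)" for \<phi> \<psi>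
    unfolding A_def by (simp add: funpow2 dx2_lin right_diff_distrib)
  have contr: "\<forall>y. \<bar>A \<phi> y\<bar> \<le> (16/90) * M" if "\<forall>y. \<bar>\<phi> y\<bar> \<le> M" for \<phi> M
    using dx2_bnd[OF dx2_bnd[OF that, of h], of h] unfolding A_def by (simp add: funpow2 abs_mult)
  have vb: "\<forall>y. \<bar>v y\<bar> \<le> h^2 * B2" using b2 h by (simp add: v_def abs_mult)
  have N: "\<bar>v x - neumann_inv A g x\<bar> \<le> 50 * H / (1 - 16/90)"
    by (rule neumann_err[OF lin contr _ _ vb]) (use T in auto)
  have L: "L1 h (D 0) x = (1/h^2) * neumann_inv A g x"
    unfolding L1_def A_def g_def f_def by simp
  have "\<bar>D 2 x - L1 h (D 0) x\<bar> = \<bar>v x - neumann_inv A g x\<bar> / h^2"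
    using h by (simp add: L v_def field_simps abs_div)
  also have "\<dots> \<le> 50 * H / (1 - 16/90) / h^2"
    using N h by (intro divide_right_mono) auto
  also have "\<dots> = (4500/74) * B8 * h^6" using h by (simp add: H_def field_simps power_eq_if)
  also have "\<dots> \<le> 61 * B8 * h^6" using B0 h by (intro mult_right_mono) auto
  finally show ?thesis .
qed

lemma part2:
  fixes D :: "nat \<Rightarrow> real \<Rightarrow> real"
  assumes der: "\<forall>m y. m < 10 \<longrightarrow> (D m has_real_derivative D (Suc m) y) (at y)"
    and bnd: "\<forall>y. \<bar>D 10 y\<bar> \<le> B10" and b2: "\<forall>y. \<bar>D 2 y\<bar> \<le> B2" and h: "h > 0"
  shows "\<bar>D 2 x - L2 h (D 0) x\<bar> \<le> 2000 * B10 * h^8"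
proof -
  define f where "f = D 0"
  define v where "v = (\<lambda>y. h^2 * D 2 y)"
  define A where "A = (\<lambda>\<phi> y. - (1/560::real) * ((dx2 h ^^ 3) \<phi>) y)"
  define g where "g = dx2 h (\<lambda>y. f y - (1/12) * (dx2 h f) y + (1/90) * ((dx2 h ^^ 2) f) y)"
  define H where "H = B10 * h^10"
  have B0: "0 \<le> B10" using bnd by (meson abs_ge_zero order_trans)
  have H0: "0 \<le> H" unfolding H_def using B0 h by simp
  have T: "\<bar>v y - A v y - g y\<bar> \<le> 1700 * H" for y
  proof -
    define c where "c k = D k y * h^k / fact k" for k
    have tf: "\<bar>f (sh y h m) - (\<Sum>k<10. real_of_int m^k * c k)\<bar> \<le> \<bar>real_of_int m\<bar>^10 * H" for m
    proof -
      have "\<bar>D 0 (y + of_int m * h) - (\<Sum>k<10. D k y / fact k * (of_int m * h)^k)\<bar> \<le> B10 * \<bar>of_int m * h\<bar>^10"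
        by (rule taylor_bound) (use der bnd in auto)
      moreover have "(\<Sum>k<10. D k y / fact k * (of_int m * h)^k) = (\<Sum>k<10. real_of_int m^k * c k)"
        by (rule sum.cong) (auto simp: c_def power_mult_distrib)
      ultimately show ?thesis using h by (simp add: f_def sh_def H_def abs_mult power_mult_distrib mult_ac)
    qed
    have tq: "\<bar>v (sh y h m) - (\<Sum>k<8. real_of_int m^k * (real ((k+2)*(k+1)) * c (k+2)))\<bar> \<le> \<bar>real_of_int m\<bar>^8 * H" for m
    proof -
      have "\<bar>(\<lambda>k. D (k+2)) 0 (y + of_int m * h) - (\<Sum>k<8. (\<lambda>k. D (k+2)) k y / fact k * (of_int m * h)^k)\<bar> \<le> B10 * \<bar>of_int m * h\<bar>^8"
        by (rule taylor_bound) (use der bnd in auto)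
      then have "\<bar>D 2 (y + of_int m * h) - (\<Sum>k<8. D (k+2) y / fact k * (of_int m * h)^k)\<bar> \<le> B10 * \<bar>of_int m * h\<bar>^8"
        by (simp add: numeral_2_eq_2)
      moreover have "h^2 * (\<Sum>k<8. D (k+2) y / fact k * (of_int m * h)^k) = (\<Sum>k<8. real_of_int m^k * (real ((k+2)*(k+1)) * c (k+2)))"
        unfolding sum_distrib_left
        by (intro sum.cong refl) (unfold c_def, rule coefQ)
      ultimately have "h^2 * \<bar>D 2 (y + of_int m * h) - (\<Sum>k<8. D (k+2) y / fact k * (of_int m * h)^k)\<bar> \<le> h^2 * (B10 * \<bar>of_int m * h\<bar>^8)"
        and eq: "h^2 * (\<Sum>k<8. D (k+2) y / fact k * (of_int m * h)^k) = (\<Sum>k<8. real_of_int m^k * (real ((k+2)*(k+1)) * c (k+2)))"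
        by (auto intro: mult_left_mono)
      moreover have "h^2 * \<bar>D 2 (y + of_int m * h) - (\<Sum>k<8. D (k+2) y / fact k * (of_int m * h)^k)\<bar>
         = \<bar>v (sh y h m) - (\<Sum>k<8. real_of_int m^k * (real ((k+2)*(k+1)) * c (k+2)))\<bar>"
        unfolding eq[symmetric] v_def sh_def by (simp add: abs_mult right_diff_distrib[symmetric])
      moreover have "h^2 * (B10 * \<bar>of_int m * h\<bar>^8) = \<bar>real_of_int m\<bar>^8 * H"
        using h by (simp add: H_def abs_mult power_mult_distrib power_add[symmetric] mult_ac)
      ultimately show ?thesis by simp
    qed
    have sh0: "sh y h 0 = y" by (simp add: sh_def)
    from trunc2[OF tf tq H0] show ?thesis unfolding sh0 A_def g_def by simp
  qed
  have lin: "A (\<lambda>y. \<phi> y - \<psi> y) = (\<lambda>y. A \<phi> y - A \<psi> y)" for \<phi> \<psi>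
    unfolding A_def by (simp add: funpow3 dx2_lin right_diff_distrib)
  have contr: "\<forall>y. \<bar>A \<phi> y\<bar> \<le> (64/560) * M" if "\<forall>y. \<bar>\<phi> y\<bar> \<le> M" for \<phi> M
    using dx2_bnd[OF dx2_bnd[OF dx2_bnd[OF that, of h], of h], of h] unfolding A_def by (simp add: funpow3 abs_mult)
  have vb: "\<forall>y. \<bar>v y\<bar> \<le> h^2 * B2" using b2 h by (simp add: v_def abs_mult)
  have N: "\<bar>v x - neumann_inv A g x\<bar> \<le> 1700 * H / (1 - 64/560)"
    by (rule neumann_err[OF lin contr _ _ vb]) (use T in auto)
  have L: "L2 h (D 0) x = (1/h^2) * neumann_inv A g x"
    unfolding L2_def A_def g_def f_def by simp
  have "\<bar>D 2 x - L2 h (D 0) x\<bar> = \<bar>v x - neumann_inv A g x\<bar> / h^2"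
    using h by (simp add: L v_def field_simps abs_div)
  also have "\<dots> \<le> 1700 * H / (1 - 64/560) / h^2"
    using N h by (intro divide_right_mono) auto
  also have "\<dots> = (952000/496) * B10 * h^8" using h by (simp add: H_def field_simps power_eq_if)
  also have "\<dots> \<le> 2000 * B10 * h^8" using B0 h by (intro mult_right_mono) auto
  finally show ?thesis .
qed

theorem lemma1:
  fixes u :: "real \<Rightarrow> real \<Rightarrow> real" and t :: real
  assumes smooth: "\<And>k x. k < 10 \<Longrightarrow> (deriv ^^ k) (\<lambda>x. u x t) differentiable (at x)"
      and bdd: "\<And>k. 1 \<le> k \<Longrightarrow> k \<le> 10 \<Longrightarrow> bounded (range ((deriv ^^ k) (\<lambda>x. u x t)))"
  shows "(\<exists>C. \<forall>h>0. \<forall>j::int.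
            \<bar>(deriv ^^ 2) (\<lambda>x. u x t) (of_int j * h) - L1 h (\<lambda>x. u x t) (of_int j * h)\<bar> \<le> C * h ^ 6)
       \<and> (\<exists>C. \<forall>h>0. \<forall>j::int.
            \<bar>(deriv ^^ 2) (\<lambda>x. u x t) (of_int j * h) - L2 h (\<lambda>x. u x t) (of_int j * h)\<bar> \<le> C * h ^ 8)"
proof -
  define D where "D k = (deriv ^^ k) (\<lambda>x. u x t)" for k
  have D0: "D 0 = (\<lambda>x. u x t)" by (simp add: D_def)
  have der: "\<forall>m y. m < 10 \<longrightarrow> (D m has_real_derivative D (Suc m) y) (at y)"
  proof (intro allI impI)
    fix m y assume "(m::nat) < 10"
    then have "D m differentiable (at y)" using smooth by (simp add: D_def)
    then have "(D m has_real_derivative deriv (D m) y) (at y)"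
      using DERIV_deriv_iff_real_differentiable by blast
    then show "(D m has_real_derivative D (Suc m) y) (at y)" by (simp add: D_def)
  qed
  have bd: "\<exists>b. \<forall>y. \<bar>D k y\<bar> \<le> b" if "1 \<le> k" "k \<le> 10" for k
  proof -
    from bdd[OF that] obtain a where "\<forall>z\<in>range (D k). norm z \<le> a"
      unfolding bounded_iff D_def by blast
    then show ?thesis by auto
  qed
  obtain B2 where B2: "\<forall>y. \<bar>D 2 y\<bar> \<le> B2" using bd[of 2] by auto
  obtain B8 where B8: "\<forall>y. \<bar>D 8 y\<bar> \<le> B8" using bd[of 8] by auto
  obtain B10 where B10: "\<forall>y. \<bar>D 10 y\<bar> \<le> B10" using bd[of 10] by auto
  have 1: "\<forall>h>0. \<forall>j::int. \<bar>D 2 (of_int j * h) - L1 h (D 0) (of_int j * h)\<bar> \<le> (61 * B8) * h ^ 6"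
    using part1[OF der B8 B2] by auto
  have 2: "\<forall>h>0. \<forall>j::int. \<bar>D 2 (of_int j * h) - L2 h (D 0) (of_int j * h)\<bar> \<le> (2000 * B10) * h ^ 8"
    using part2[OF der B10 B2] by auto
  show ?thesis using 1 2 unfolding D0 by (auto simp: D_def)
qed

end
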